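(* Let $C>0$. There exist $K,\varepsilon_0>0$ such that for all $0<\varepsilon<\varepsilon_0$, all $0<\zeta\le C\varepsilon^{3q-1}$ and all $s\ge0$, $$\inf\Big\{L(\nu)\ :\ \nu\in{\rm AC}([0,1],\mathbb{R}^2),\ \nu(0)=(0,-s),\ \nu(1)=(\varepsilon^q,\varepsilon),\ \nu([0,1])\subset D_\zeta\Big\}\ \ge\ L_{\rm SR}(\gamma_{s,\varepsilon})-K\zeta^{1-\frac1b}.$$
   Context: Fix an odd integer $b\geq5$, $q=b/2$. $L(\cdot)$ is the Euclidean length of plane curves. Let $P(x_1,x_2)=x_1^2-x_2^b$, and $\widetilde P(x_1,x_2)=P(x_1,x_2)$ if $x_2\ge0$, $\widetilde P(x_1,x_2)=x_1^2$ if $x_2<0$. For $\zeta>0$, $D_\zeta=\{x\in\mathbb{R}^2: x_1\ge0,\ \widetilde P(x)\le\zeta\}$. Let $\gamma(t)=(0,t,\tfrac{t^{2b+1}}{2b+1})$ for $t<0$ and $\gamma(t)=(t^q,t,0)$ for $t\ge0$, $\gamma_{s,\varepsilon}=\gamma|_{[-s,\varepsilon]}$; its sub-Riemannian length equals the Euclidean length of its projection to the first two coordinates, i.e. $L_{\rm SR}(\gamma_{s,\varepsilon})=s+\int_0^\varepsilon\sqrt{1+q^2t^{2q-2}}\,dt$. *)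

theory Defs
  imports "HOL-Analysis.Analysis"
begin

text \<open>Points of the plane are pairs; the norm on real * real is the Euclidean one.\<close>

definition P :: "nat \<Rightarrow> real \<times> real \<Rightarrow> real" where
  "P b x = (fst x)^2 - (snd x)^b"

definition Ptilde :: "nat \<Rightarrow> real \<times> real \<Rightarrow> real" where
  "Ptilde b x = (if snd x \<ge> 0 then P b x else (fst x)^2)"

definition Dzeta :: "nat \<Rightarrow> real \<Rightarrow> (real \<times> real) set" where
  "Dzeta b \<zeta> = {x. fst x \<ge> 0 \<and> Ptilde b x \<le> \<zeta>}"

definition abs_cont_on :: "real \<Rightarrow> real \<Rightarrow> (real \<Rightarrow> 'a::real_normed_vector) \<Rightarrow> bool" where
  "abs_cont_on a b f \<longleftrightarrow>
     (\<forall>e>0. \<exists>d>0. \<forall>(n::nat) (l::nat \<Rightarrow> real) (r::nat \<Rightarrow> real).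
        (\<forall>i<n. a \<le> l i \<and> l i \<le> r i \<and> r i \<le> b) \<and>
        (\<forall>i<n. \<forall>j<n. i \<noteq> j \<longrightarrow> r i \<le> l j \<or> r j \<le> l i) \<and>
        (\<Sum>i<n. r i - l i) < d
        \<longrightarrow> (\<Sum>i<n. norm (f (r i) - f (l i))) < e)"

definition curve_length :: "real \<Rightarrow> real \<Rightarrow> (real \<Rightarrow> 'a::real_normed_vector) \<Rightarrow> real" where
  "curve_length a b f = Sup {(\<Sum>i<n. norm (f (t (Suc i)) - f (t i))) | n t.
        t 0 = a \<and> t n = b \<and> (\<forall>i<n. t i \<le> t (Suc i))}"

text \<open>Sub-Riemannian length of gamma restricted to [-s, eps], as given in the context.\<close>

definition L_SR :: "nat \<Rightarrow> real \<Rightarrow> real \<Rightarrow> real" where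
  "L_SR b s \<epsilon> = s + integral {0..\<epsilon>}
      (\<lambda>t. sqrt (1 + (real b / 2)^2 * t powr (2 * (real b / 2) - 2)))"

end

theory Submission
  imports Defs
begin

definition clampw :: "real \<Rightarrow> nat \<Rightarrow> real \<Rightarrow> real" where
  "clampw h j x = max (real j * h) (min (real (Suc j) * h) x)"

lemma clamp_sum:
  fixes F :: "real \<Rightarrow> 'a::ab_group_add"
  assumes "h > 0" "0 \<le> y" "y \<le> real M * h"
  shows "(\<Sum>j<M. F (clampw h j y) - F (real j * h)) = F y - F 0"
  using assms(2,3)
proof (induction M arbitrary: y)
  case 0
  then show ?case by simp
next
  case (Suc M)
  show ?case
  proof (cases "y \<le> real M * h")
    case True
    have "clampw h M y = real M * h" unfolding clampw_def using True \<open>h>0\<close> by auto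
    then show ?thesis using Suc True by simp
  next
    case False
    have c: "clampw h j y = real (Suc j) * h" if "j < M" for j
    proof -
      have "real (Suc j) * h \<le> real M * h" using that \<open>h>0\<close> by (intro mult_right_mono) auto
      then have "real (Suc j) * h < y" using False by linarith
      then show ?thesis unfolding clampw_def using \<open>h>0\<close>
        by (simp add: max_def min_def algebra_simps)
    qed
    have "(\<Sum>j<M. F (clampw h j y) - F (real j * h)) = (\<Sum>j<M. F (real (Suc j) * h) - F (real j * h))"
      using c by auto
    also have "\<dots> = F (real M * h) - F 0"
      by (subst sum_lessThan_telescope) simp
    finally have 1: "(\<Sum>j<M. F (clampw h j y) - F (real j * h)) = F (real M * h) - F 0" .
    have "clampw h M y = y" unfolding clampw_def using False Suc.prems by auto
    then show ?thesis using 1 by simp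
  qed
qed

lemma clamp_diff:
  fixes F :: "real \<Rightarrow> 'a::ab_group_add"
  assumes "h > 0" "0 \<le> x" "x \<le> real M * h" "0 \<le> y" "y \<le> real M * h"
  shows "(\<Sum>j<M. F (clampw h j y) - F (clampw h j x)) = F y - F x"
proof -
  have "(\<Sum>j<M. F (clampw h j y) - F (clampw h j x)) =
     (\<Sum>j<M. F (clampw h j y) - F (real j * h)) - (\<Sum>j<M. F (clampw h j x) - F (real j * h))"
    by (simp add: sum_subtractf[symmetric])
  also have "\<dots> = F y - F x" using clamp_sum[of h y M F] clamp_sum[of h x M F] assms by simp
  finally show ?thesis .
qed

lemma chain_mono:
  fixes t :: "nat \<Rightarrow> real"
  assumes "\<forall>i<n. t i \<le> t (Suc i)" "i \<le> j" "j \<le> n"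
  shows "t i \<le> t j"
  using assms(2,3)
proof (induction j)
  case 0 then show ?case by simp
next
  case (Suc j)
  show ?case
  proof (cases "i = Suc j")
    case True then show ?thesis by simp
  next
    case False
    then have "i \<le> j" using Suc.prems by simp
    then have "t i \<le> t j" using Suc.IH Suc.prems by simp
    also have "t j \<le> t (Suc j)" using assms(1) Suc.prems by simp
    finally show ?thesis .
  qed
qed

lemma clampw_mono: "h > 0 \<Longrightarrow> x \<le> y \<Longrightarrow> clampw h j x \<le> clampw h j y"
  unfolding clampw_def by auto

lemma clampw_range: "h > 0 \<Longrightarrow> real j * h \<le> clampw h j x \<and> clampw h j x \<le> real (Suc j) * h"
  unfolding clampw_def by (auto simp: algebra_simps)

lemma abs_cont_bv:
  fixes \<nu> :: "real \<Rightarrow> 'a::real_normed_vector"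
  assumes "abs_cont_on 0 1 \<nu>"
  shows "\<exists>B. \<forall>n t. t 0 = 0 \<and> t n = 1 \<and> (\<forall>i<n. t i \<le> t (Suc i)) \<longrightarrow>
           (\<Sum>i<n. norm (\<nu> (t (Suc i)) - \<nu> (t i))) \<le> B"
proof -
  obtain d where d: "d > 0" and dH0: "\<forall>(n::nat) (l::nat\<Rightarrow>real) (r::nat\<Rightarrow>real). (\<forall>i<n. 0 \<le> l i \<and> l i \<le> r i \<and> r i \<le> 1) \<and>
        (\<forall>i<n. \<forall>j<n. i \<noteq> j \<longrightarrow> r i \<le> l j \<or> r j \<le> l i) \<and>
        (\<Sum>i<n. r i - l i) < d \<longrightarrow> (\<Sum>i<n. norm (\<nu> (r i) - \<nu> (l i))) < 1"
    using assms[unfolded abs_cont_on_def, rule_format, of 1] by auto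
  note dH = dH0[rule_format]
  obtain M :: nat where M: "1 / d < real M" using reals_Archimedean2 by blast
  have Mpos: "real M > 0" using M d by (smt (verit) divide_pos_pos)
  define h where "h = 1 / real M"
  have hpos: "h > 0" unfolding h_def using Mpos by simp
  have hd: "h < d" unfolding h_def using M d Mpos by (simp add: field_simps)
  have Mh: "real M * h = 1" unfolding h_def using Mpos by simp
  show ?thesis
  proof (rule exI[of _ "real M"], intro allI impI)
    fix n t assume H: "t 0 = 0 \<and> t n = (1::real) \<and> (\<forall>i<n. t i \<le> t (Suc i))"
    have tr: "0 \<le> t i \<and> t i \<le> 1" if "i \<le> n" for i
      using chain_mono[of n t 0 i] chain_mono[of n t i n] H that by auto
    have step: "norm (\<nu> (t (Suc i)) - \<nu> (t i)) \<le>
        (\<Sum>j<M. norm (\<nu> (clampw h j (t (Suc i))) - \<nu> (clampw h j (t i))))" if "i < n" for i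
    proof -
      have "\<nu> (t (Suc i)) - \<nu> (t i) = (\<Sum>j<M. \<nu> (clampw h j (t (Suc i))) - \<nu> (clampw h j (t i)))"
        using clamp_diff[of h "t i" M "t (Suc i)" \<nu>] hpos Mh tr[of i] tr[of "Suc i"] that by simp
      then show ?thesis by (metis norm_sum)
    qed
    have each: "(\<Sum>i<n. norm (\<nu> (clampw h j (t (Suc i))) - \<nu> (clampw h j (t i)))) < 1"
      if "j < M" for j
    proof (rule dH, intro conjI)
      show "\<forall>i<n. 0 \<le> clampw h j (t i) \<and> clampw h j (t i) \<le> clampw h j (t (Suc i)) \<and> clampw h j (t (Suc i)) \<le> 1"
      proof (intro allI impI)
        fix i assume i: "i < n"
        have r1: "real (Suc j) * h \<le> 1" using that hpos Mh by (metis Suc_leI mult_right_mono of_nat_le_iff less_imp_le)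
        have r0: "0 \<le> real j * h" using hpos by simp
        have "t i \<le> t (Suc i)" using H i by simp
        then show "0 \<le> clampw h j (t i) \<and> clampw h j (t i) \<le> clampw h j (t (Suc i)) \<and> clampw h j (t (Suc i)) \<le> 1"
          using clampw_range[OF hpos, of j "t i"] clampw_range[OF hpos, of j "t (Suc i)"] clampw_mono[OF hpos] r0 r1
          by (meson order_trans)
      qed
    next
      show "\<forall>i<n. \<forall>k<n. i \<noteq> k \<longrightarrow> clampw h j (t (Suc i)) \<le> clampw h j (t k) \<or> clampw h j (t (Suc k)) \<le> clampw h j (t i)"
      proof (intro allI impI)
      fix i k assume i: "i < n" and k: "k < n" and ik: "i \<noteq> k"
      show "clampw h j (t (Suc i)) \<le> clampw h j (t k) \<or> clampw h j (t (Suc k)) \<le> clampw h j (t i)"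
      proof (cases "i < k")
        case True
        then have "t (Suc i) \<le> t k" using chain_mono[of n t "Suc i" k] H k by auto
        then show ?thesis using clampw_mono[OF hpos] by blast
      next
        case False
        then have "t (Suc k) \<le> t i" using chain_mono[of n t "Suc k" i] H i ik by auto
        then show ?thesis using clampw_mono[OF hpos] by blast
      qed
      qed
    next
      have "(\<Sum>i<n. clampw h j (t (Suc i)) - clampw h j (t i)) = clampw h j (t n) - clampw h j (t 0)"
        by (rule sum_lessThan_telescope)
      also have "\<dots> \<le> h"
      proof -
        have "real (Suc j) * h = real j * h + h" by (simp add: algebra_simps)
        then show ?thesis using clampw_range[OF hpos, of j "t n"] clampw_range[OF hpos, of j "t 0"] by linarith
      qed
      finally show "(\<Sum>i<n. clampw h j (t (Suc i)) - clampw h j (t i)) < d" using hd by simp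
    qed
    have "(\<Sum>i<n. norm (\<nu> (t (Suc i)) - \<nu> (t i))) \<le>
       (\<Sum>i<n. \<Sum>j<M. norm (\<nu> (clampw h j (t (Suc i))) - \<nu> (clampw h j (t i))))"
      by (rule sum_mono) (use step in auto)
    also have "\<dots> = (\<Sum>j<M. \<Sum>i<n. norm (\<nu> (clampw h j (t (Suc i))) - \<nu> (clampw h j (t i))))"
      by (rule sum.swap)
    also have "\<dots> \<le> (\<Sum>j<M. 1)" by (rule sum_mono) (use each in \<open>auto intro: less_imp_le\<close>)
    finally show "(\<Sum>i<n. norm (\<nu> (t (Suc i)) - \<nu> (t i))) \<le> real M" by simp
  qed
qed

lemma curve_length_ge:
  fixes \<nu> :: "real \<Rightarrow> 'a::real_normed_vector"
  assumes "abs_cont_on 0 1 \<nu>" "t 0 = 0" "t n = 1" "\<forall>i<n. t i \<le> t (Suc i)"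
  shows "(\<Sum>i<n. norm (\<nu> (t (Suc i)) - \<nu> (t i))) \<le> curve_length 0 1 \<nu>"
proof -
  obtain B where B: "\<forall>n t. t 0 = 0 \<and> t n = 1 \<and> (\<forall>i<n. t i \<le> t (Suc i)) \<longrightarrow>
           (\<Sum>i<n. norm (\<nu> (t (Suc i)) - \<nu> (t i))) \<le> B" using abs_cont_bv[OF assms(1)] by blast
  show ?thesis unfolding curve_length_def
  proof (rule cSup_upper)
    show "bdd_above {(\<Sum>i<n. norm (\<nu> (t (Suc i)) - \<nu> (t i))) | n t.
        t 0 = 0 \<and> t n = 1 \<and> (\<forall>i<n. t i \<le> t (Suc i))}"
      by (rule bdd_aboveI[of _ B]) (use B in blast)
  qed (use assms in blast)
qed

lemma abs_cont_continuous:
  fixes \<nu> :: "real \<Rightarrow> 'a::real_normed_vector"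
  assumes "abs_cont_on 0 1 \<nu>"
  shows "continuous_on {0..1} \<nu>"
  unfolding continuous_on_iff
proof (intro ballI allI impI)
  fix x e :: real assume x: "x \<in> {0..1}" and e: "e > 0"
  obtain d where d: "d > 0" and dH0: "\<forall>(n::nat) (l::nat\<Rightarrow>real) (r::nat\<Rightarrow>real). (\<forall>i<n. 0 \<le> l i \<and> l i \<le> r i \<and> r i \<le> 1) \<and>
        (\<forall>i<n. \<forall>j<n. i \<noteq> j \<longrightarrow> r i \<le> l j \<or> r j \<le> l i) \<and>
        (\<Sum>i<n. r i - l i) < d \<longrightarrow> (\<Sum>i<n. norm (\<nu> (r i) - \<nu> (l i))) < e"
    using assms[unfolded abs_cont_on_def, rule_format, of e] e by auto
  note dH = dH0[rule_format]
  show "\<exists>d>0. \<forall>x'\<in>{0..1}. dist x' x < d \<longrightarrow> dist (\<nu> x') (\<nu> x) < e"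
  proof (intro exI[of _ d] conjI ballI impI d)
    fix y assume y: "y \<in> {0..1}" and dy: "dist y x < d"
    have a: "min x y \<le> max x y" by simp
    have bb: "max x y - min x y < d" using dy by (auto simp: dist_real_def max_def min_def)
    have 1: "norm (\<nu> (max x y) - \<nu> (min x y)) < e"
      using dH[of 1 "\<lambda>_. min x y" "\<lambda>_. max x y"] a bb x y by auto
    show "dist (\<nu> y) (\<nu> x) < e"
      using 1 by (cases "x \<le> y") (auto simp: dist_norm norm_minus_commute max_def min_def)
  qed
qed

lemma cs2: fixes a b d e :: real assumes "a\<^sup>2 + b\<^sup>2 \<le> 1"
  shows "a * d + b * e \<le> sqrt (e\<^sup>2 + d\<^sup>2)"
proof (cases "a * d + b * e \<le> 0")
  case True
  have "0 \<le> sqrt (e\<^sup>2 + d\<^sup>2)" by simp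
  then show ?thesis using True by linarith
next
  case False
  have id: "(a\<^sup>2 + b\<^sup>2) * (e\<^sup>2 + d\<^sup>2) - (a * d + b * e)\<^sup>2 = (a * e - b * d)\<^sup>2"
    by (simp add: power2_eq_square algebra_simps)
  have "(a * d + b * e)\<^sup>2 \<le> (a\<^sup>2 + b\<^sup>2) * (e\<^sup>2 + d\<^sup>2)"
    using id zero_le_power2[of "a * e - b * d"] by linarith
  also have "\<dots> \<le> e\<^sup>2 + d\<^sup>2" using assms by (simp add: mult_left_le_one_le add_nonneg_nonneg)
  finally have "(a * d + b * e)\<^sup>2 \<le> e\<^sup>2 + d\<^sup>2" .
  then show ?thesis using False by (meson real_le_rsqrt)
qed

lemma seg_abstract:
  fixes A B A' B' :: "real \<Rightarrow> real"
  assumes yy: "y < y'"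
    and cA: "continuous_on {y..y'} A" and cB: "continuous_on {y..y'} B"
    and dA: "\<And>Y. y < Y \<Longrightarrow> Y < y' \<Longrightarrow> (A has_real_derivative A' Y) (at Y)"
    and dB: "\<And>Y. y < Y \<Longrightarrow> Y < y' \<Longrightarrow> (B has_real_derivative B' Y) (at Y)"
    and grad: "\<And>Y X. y < Y \<Longrightarrow> Y < y' \<Longrightarrow> min x x' \<le> X \<Longrightarrow> X \<le> max x x' \<Longrightarrow>
                  (A' Y + B' Y * X)\<^sup>2 + (B Y)\<^sup>2 \<le> 1"
  shows "(A y' + B y' * x') - (A y + B y * x) \<le> norm ((x', y') - (x, y))"
proof -
  define d where "d = y' - y"
  define e where "e = x' - x"
  define h where "h = (\<lambda>l. A (y + l * d) + B (y + l * d) * (x + l * e))"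
  define hd where "hd = (\<lambda>l. A' (y + l * d) * d + B' (y + l * d) * d * (x + l * e) + B (y + l * d) * e)"
  have dpos: "d > 0" using yy d_def by simp
  have img: "(\<lambda>l. y + l * d) ` {0..1} \<subseteq> {y..y'}"
  proof
    fix z assume "z \<in> (\<lambda>l. y + l * d) ` {0..1}"
    then obtain l where l: "l \<in> {0..1}" "z = y + l * d" by auto
    have "l * d \<le> d" using l dpos by (simp add: mult_left_le_one_le)
    then have "y + l * d \<le> y'" using d_def by linarith
    moreover have "y \<le> y + l * d" using l dpos by simp
    ultimately show "z \<in> {y..y'}" using l by auto
  qed
  have cl: "continuous_on {0..1} (\<lambda>l::real. y + l * d)" by (intro continuous_intros)
  have ch: "continuous_on {0..1} h" unfolding h_def
    by (intro continuous_intros continuous_on_compose2[OF cA cl img]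
              continuous_on_compose2[OF cB cl img])
  have der: "(h has_real_derivative hd l) (at l)" if "0 < l" "l < 1" for l
  proof -
    have "l * d < d" using that dpos by (simp add: mult_less_cancel_right2)
    have Y: "y < y + l * d" "y + l * d < y'"
      using that dpos apply simp using \<open>l * d < d\<close> d_def by linarith
    have lin: "((\<lambda>l. y + l * d) has_real_derivative d) (at l)"
      by (auto intro!: derivative_eq_intros)
    have a: "((\<lambda>l. A (y + l * d)) has_real_derivative A' (y + l * d) * d) (at l)"
      by (rule DERIV_chain2[OF _ lin]) (rule dA[OF Y])
    have b: "((\<lambda>l. B (y + l * d)) has_real_derivative B' (y + l * d) * d) (at l)"
      by (rule DERIV_chain2[OF _ lin]) (rule dB[OF Y])
    show ?thesis unfolding h_def hd_def
      by (rule derivative_eq_intros a b | simp add: algebra_simps)+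
  qed
  obtain l where l: "0 < l" "l < 1" "h 1 - h 0 = (\<lambda>u. hd l * u) (1 - 0)"
    using mvt[of 0 1 h "\<lambda>l u. hd l * u"] ch der unfolding has_field_derivative_def
    by (metis zero_less_one)
  have "l * d < d" using l dpos by (simp add: mult_less_cancel_right2)
  have Y: "y < y + l * d" "y + l * d < y'"
    using l dpos apply simp using \<open>l * d < d\<close> d_def by linarith
  have X: "min x x' \<le> x + l * e" "x + l * e \<le> max x x'"
  proof -
    have "x + l * e = (1 - l) * x + l * x'" unfolding e_def by (simp add: algebra_simps)
    moreover have "(1 - l) * x + l * x' \<ge> (1 - l) * min x x' + l * min x x'"
      using l by (intro add_mono mult_left_mono) auto
    moreover have "(1 - l) * x + l * x' \<le> (1 - l) * max x x' + l * max x x'"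
      using l by (intro add_mono mult_left_mono) auto
    ultimately show "min x x' \<le> x + l * e" "x + l * e \<le> max x x'" by (auto simp: algebra_simps)
  qed
  have g: "(A' (y + l * d) + B' (y + l * d) * (x + l * e))\<^sup>2 + (B (y + l * d))\<^sup>2 \<le> 1"
    using grad[OF Y X] .
  have "hd l = (A' (y + l * d) + B' (y + l * d) * (x + l * e)) * d + B (y + l * d) * e"
    unfolding hd_def by (simp add: algebra_simps)
  also have "\<dots> \<le> sqrt (e\<^sup>2 + d\<^sup>2)" by (rule cs2[OF g])
  finally have "h 1 - h 0 \<le> sqrt (e\<^sup>2 + d\<^sup>2)" using l by simp
  moreover have "h 1 = A y' + B y' * x'" "h 0 = A y + B y * x"
    unfolding h_def d_def e_def by auto
  moreover have "norm ((x', y') - (x, y)) = sqrt (e\<^sup>2 + d\<^sup>2)"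
    unfolding e_def d_def by (simp add: norm_Pair)
  ultimately show ?thesis by simp
qed

lemma levels_partition:
  fixes \<nu> :: "real \<Rightarrow> real \<times> real" and lev :: "nat \<Rightarrow> real"
  assumes cont: "continuous_on {0..1} \<nu>" and l0: "lev 0 = snd (\<nu> 0)" and ml: "mono lev"
  shows "\<forall>T. 0 \<le> T \<and> T \<le> 1 \<and> snd (\<nu> T) = lev (Suc m) \<longrightarrow>
     (\<exists>t. t 0 = 0 \<and> t (Suc m) = T \<and> (\<forall>i<Suc m. t i \<le> t (Suc i)) \<and>
          (\<forall>k\<le>Suc m. 0 \<le> t k \<and> t k \<le> 1 \<and> snd (\<nu> (t k)) = lev k))"
proof (induction m)
  case 0
  show ?case
  proof (intro allI impI)
    fix T :: real assume T: "0 \<le> T \<and> T \<le> 1 \<and> snd (\<nu> T) = lev (Suc 0)"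
    show "\<exists>t. t 0 = 0 \<and> t (Suc 0) = T \<and> (\<forall>i<Suc 0. t i \<le> t (Suc i)) \<and>
          (\<forall>k\<le>Suc 0. 0 \<le> t k \<and> t k \<le> 1 \<and> snd (\<nu> (t k)) = lev k)"
      by (rule exI[of _ "\<lambda>k. if k = 0 then 0 else T"]) (use T l0 in \<open>auto simp: le_Suc_eq\<close>)
  qed
next
  case (Suc m)
  show ?case
  proof (intro allI impI)
    fix T :: real assume T: "0 \<le> T \<and> T \<le> 1 \<and> snd (\<nu> T) = lev (Suc (Suc m))"
    have cs: "continuous_on {0..T} (\<lambda>u. snd (\<nu> u))"
      using T by (intro continuous_intros continuous_on_subset[OF cont]) auto
    have "lev 0 \<le> lev (Suc m)" "lev (Suc m) \<le> lev (Suc (Suc m))" using ml by (auto intro: monoD)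
    then obtain T' where T': "0 \<le> T'" "T' \<le> T" "snd (\<nu> T') = lev (Suc m)"
      using IVT'[of "\<lambda>u. snd (\<nu> u)" 0 "lev (Suc m)" T] cs T l0 by auto
    obtain t where t: "t 0 = 0" "t (Suc m) = T'" "\<forall>i<Suc m. t i \<le> t (Suc i)"
       "\<forall>k\<le>Suc m. 0 \<le> t k \<and> t k \<le> 1 \<and> snd (\<nu> (t k)) = lev k"
      using Suc.IH T T' by force
    show "\<exists>t. t 0 = 0 \<and> t (Suc (Suc m)) = T \<and> (\<forall>i<Suc (Suc m). t i \<le> t (Suc i)) \<and>
          (\<forall>k\<le>Suc (Suc m). 0 \<le> t k \<and> t k \<le> 1 \<and> snd (\<nu> (t k)) = lev k)"
    proof -
      let ?t = "t(Suc (Suc m) := T)"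
      have 1: "\<forall>i<Suc (Suc m). ?t i \<le> ?t (Suc i)" using t T' by (auto simp: less_Suc_eq)
      have 2: "\<forall>k\<le>Suc (Suc m). 0 \<le> ?t k \<and> ?t k \<le> 1 \<and> snd (\<nu> (?t k)) = lev k"
        using t T by (auto simp: le_Suc_eq)
      show ?thesis using 1 2 t by (intro exI[of _ ?t]) auto
    qed
  qed
qed

definition wq :: "real \<Rightarrow> real \<Rightarrow> real" where "wq q y = q * y powr (q - 1)"
definition Sp :: "real \<Rightarrow> real \<Rightarrow> real" where "Sp q y = sqrt (1 + (wq q y)\<^sup>2)"
definition Sq :: "real \<Rightarrow> real \<Rightarrow> real" where "Sq q y = integral {0..y} (Sp q)"
definition bet :: "real \<Rightarrow> real \<Rightarrow> real" where "bet q y = wq q y / Sp q y"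
definition bet' :: "real \<Rightarrow> real \<Rightarrow> real" where "bet' q y = q * (q - 1) * y powr (q - 2) / (Sp q y) ^ 3"

lemma Sp_ge1: "Sp q y \<ge> 1" unfolding Sp_def by simp
lemma Sp_pos: "Sp q y > 0" using Sp_ge1[of q y] by linarith

lemma d_powr: "y > 0 \<Longrightarrow> ((\<lambda>y. y powr q) has_real_derivative wq q y) (at y)"
  unfolding wq_def using has_real_derivative_powr[of y q] by simp

lemma d_wq: "y > 0 \<Longrightarrow> (wq q has_real_derivative q * (q - 1) * y powr (q - 2)) (at y)"
proof -
  assume y: "y > 0"
  have "((\<lambda>y. q * y powr (q - 1)) has_real_derivative q * ((q - 1) * y powr (q - 1 - 1))) (at y)"
    by (intro DERIV_cmult has_real_derivative_powr y)
  then show ?thesis unfolding wq_def by (simp add: algebra_simps)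
qed

lemma d_Sp: "y > 0 \<Longrightarrow> (Sp q has_real_derivative wq q y * (q * (q - 1) * y powr (q - 2)) / Sp q y) (at y)"
proof -
  assume y: "y > 0"
  have w: "(wq q has_real_derivative q * (q - 1) * y powr (q - 2)) (at y)" by (rule d_wq[OF y])
  have "((\<lambda>y. sqrt (1 + (wq q y)\<^sup>2)) has_real_derivative
      inverse (sqrt (1 + (wq q y)\<^sup>2)) / 2 * (2 * wq q y * (q * (q - 1) * y powr (q - 2)))) (at y)"
    by (rule DERIV_chain2[OF DERIV_real_sqrt]) (auto intro!: derivative_eq_intros w add_pos_nonneg)
  moreover have "inverse (sqrt (1 + (wq q y)\<^sup>2)) / 2 * (2 * wq q y * (q * (q - 1) * y powr (q - 2)))
     = wq q y * (q * (q - 1) * y powr (q - 2)) / Sp q y" unfolding Sp_def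
    by (simp add: divide_simps)
  ultimately show ?thesis unfolding Sp_def[abs_def] by simp
qed

lemma d_bet: "y > 0 \<Longrightarrow> (bet q has_real_derivative bet' q y) (at y)"
proof -
  assume y: "y > 0"
  have "((\<lambda>y. wq q y / Sp q y) has_real_derivative
     ((q * (q - 1) * y powr (q - 2)) * Sp q y - wq q y * (wq q y * (q * (q - 1) * y powr (q - 2)) / Sp q y)) / (Sp q y * Sp q y)) (at y)"
    by (rule DERIV_divide[OF d_wq[OF y] d_Sp[OF y]]) (use Sp_pos[of q y] in simp)
  moreover have "((q * (q - 1) * y powr (q - 2)) * Sp q y - wq q y * (wq q y * (q * (q - 1) * y powr (q - 2)) / Sp q y)) / (Sp q y * Sp q y)
      = bet' q y"
  proof -
    define D where "D = q * (q - 1) * y powr (q - 2)"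
    define S where "S = Sp q y"
    define w where "w = wq q y"
    have s2: "S\<^sup>2 = 1 + w\<^sup>2" unfolding S_def w_def Sp_def by simp
    have Sp: "S > 0" unfolding S_def by (rule Sp_pos)
    have "(D * S - w * (w * D / S)) / (S * S) = D * (S\<^sup>2 - w\<^sup>2) / S ^ 3"
      using Sp by (simp add: field_simps power2_eq_square power3_eq_cube)
    also have "\<dots> = D / S ^ 3" using s2 by simp
    finally show ?thesis unfolding bet'_def D_def S_def w_def .
  qed
  ultimately show ?thesis unfolding bet_def[abs_def] by simp
qed

lemma cont_wq: "q > 1 \<Longrightarrow> continuous_on {0..} (wq q)"
  unfolding wq_def[abs_def] by (intro continuous_intros continuous_on_powr') auto

lemma cont_powr: "q > 0 \<Longrightarrow> continuous_on {0..} (\<lambda>y::real. y powr q)"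
  by (intro continuous_intros continuous_on_powr') auto

lemma cont_Sp: "q > 1 \<Longrightarrow> continuous_on {0..} (Sp q)"
  unfolding Sp_def[abs_def] by (intro continuous_intros cont_wq)

lemma cont_bet: "q > 1 \<Longrightarrow> continuous_on {0..} (bet q)"
  unfolding bet_def[abs_def] using Sp_pos
  by (intro continuous_intros cont_wq cont_Sp) (auto simp: less_le)

lemma cont_Sq: "q > 1 \<Longrightarrow> continuous_on {0..T} (Sq q)"
  unfolding Sq_def[abs_def]
  by (intro indefinite_integral_continuous_1 integrable_continuous_real
       continuous_on_subset[OF cont_Sp]) auto

lemma d_Sq: "q > 1 \<Longrightarrow> y > 0 \<Longrightarrow> (Sq q has_real_derivative Sp q y) (at y)"
proof -
  assume q: "q > 1" and y: "y > 0"
  have "((\<lambda>x. integral {0..x} (Sp q)) has_real_derivative Sp q y) (at y within {0..y+1})"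
    by (rule integral_has_real_derivative) (use continuous_on_subset[OF cont_Sp[OF q]] y in auto)
  moreover have "at y within {0..y+1} = at y" by (rule at_within_Icc_at) (use y in auto)
  ultimately show ?thesis unfolding Sq_def[abs_def] by simp
qed

lemma Sq0: "Sq q 0 = 0" unfolding Sq_def by simp
lemma bet0: "q > 1 \<Longrightarrow> bet q 0 = 0" unfolding bet_def wq_def by simp

lemma powr_sq_b: "b > 0 \<Longrightarrow> Y \<ge> 0 \<Longrightarrow> (Y powr (real b / 2))\<^sup>2 = Y ^ b"
proof -
  assume Y: "Y \<ge> 0" and bp: "b > 0"
  show ?thesis
  proof (cases "Y = 0")
    case True
    then show ?thesis using bp by (cases b) auto
  next
    case False
    then have Yp: "Y > 0" using Y by simp
    have "(Y powr (real b / 2))\<^sup>2 = Y powr (real b / 2) * Y powr (real b / 2)"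
      by (simp add: power2_eq_square)
    also have "\<dots> = Y powr (real b / 2 + real b / 2)"
      by (rule powr_add[symmetric])
    also have "\<dots> = Y powr real b" by simp
    also have "\<dots> = Y ^ b" using Yp by (simp add: powr_realpow)
    finally show ?thesis .
  qed
qed

lemma bet'_le: "q \<ge> 1 \<Longrightarrow> 0 \<le> bet' q Y \<and> bet' q Y \<le> q * (q - 1) * Y powr (q - 2)"
proof -
  assume q: "q \<ge> 1"
  have n: "0 \<le> q * (q - 1) * Y powr (q - 2)" using q by simp
  have S3: "1 \<le> (Sp q Y) ^ 3" using Sp_ge1[of q Y] by (simp add: one_le_power)
  have "q * (q - 1) * Y powr (q - 2) / (Sp q Y) ^ 3 \<le> q * (q - 1) * Y powr (q - 2) / 1"
    by (rule divide_left_mono) (use n S3 Sp_pos[of q Y] in auto)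
  moreover have "0 \<le> q * (q - 1) * Y powr (q - 2) / (Sp q Y) ^ 3"
    by (rule divide_nonneg_nonneg) (use n S3 Sp_pos[of q Y] in auto)
  ultimately show ?thesis unfolding bet'_def by simp
qed

lemma I1:
  fixes b :: nat and \<zeta> Y :: real
  assumes q: "q = real b / 2" and b: "b \<ge> 5" and z: "\<zeta> > 0" and Y: "Y > 0"
  shows "bet' q Y * (sqrt (\<zeta> + Y ^ b) - Y powr q) \<le> 4 * q * (q - 1) * \<zeta> / (Y + \<zeta> powr (1 / real b))\<^sup>2"
proof -
  define F where "F = sqrt (\<zeta> + Y ^ b)"
  define g where "g = Y powr q"
  define zz where "zz = \<zeta> powr (1 / real b)"
  define m where "m = max Y zz"
  have q2: "q > 2" using q b by simp
  have g2: "g\<^sup>2 = Y ^ b" unfolding g_def q using powr_sq_b[of b Y] Y b by simp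
  have g0: "g \<ge> 0" unfolding g_def by simp
  have F2: "F\<^sup>2 = \<zeta> + g\<^sup>2" unfolding F_def using g2 Y z by simp
  have Fg: "F \<ge> g"
  proof -
    have yb: "0 \<le> Y ^ b" using Y by simp
    have "0 \<le> \<zeta> + Y ^ b" using z yb by linarith
    have "g = sqrt (g\<^sup>2)" using g0 by simp
    also have "sqrt (g\<^sup>2) \<le> F" unfolding F_def using g2 z Y \<open>0 \<le> \<zeta> + Y ^ b\<close> by (intro real_sqrt_le_mono) simp
    finally show ?thesis .
  qed
  have F0: "F \<ge> 0" using Fg g0 by linarith
  have Fp: "F > 0"
  proof -
    have yb: "0 < Y ^ b" using Y by simp
    have "0 < \<zeta> + Y ^ b" using z yb by linarith
    then show "F > 0" unfolding F_def by simp
  qed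
  have Fgpos: "F + g > 0"
  proof -
    have "F > 0" using Fp .
    then show ?thesis using g0 by simp
  qed
  have Fmg: "F - g = \<zeta> / (F + g)"
  proof -
    have "(F - g) * (F + g) = \<zeta>" using F2 by (simp add: algebra_simps power2_eq_square)
    then show ?thesis using Fgpos by (simp add: eq_divide_eq)
  qed
  have zzpos: "zz > 0" unfolding zz_def using z by simp
  have zzq: "zz powr q = sqrt \<zeta>"
  proof -
    have "zz powr q = \<zeta> powr (1 / real b * q)" unfolding zz_def by (simp add: powr_powr)
    also have "1 / real b * q = 1 / 2" using q b by simp
    finally show ?thesis using z by (simp add: powr_half_sqrt)
  qed
  have mpos: "m > 0" unfolding m_def using Y by simp
  have A1: "Y powr (q - 2) \<le> m powr (q - 2)" unfolding m_def using Y q2 by (intro powr_mono2) auto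
  have A2: "(Y + zz)\<^sup>2 \<le> 4 * m\<^sup>2"
  proof -
    have "Y + zz \<le> 2 * m" unfolding m_def by simp
    then have "(Y + zz)\<^sup>2 \<le> (2 * m)\<^sup>2" using Y zzpos by (intro power_mono) auto
    then show ?thesis by (simp add: power2_eq_square)
  qed
  have A3: "m powr (q - 2) * m\<^sup>2 = m powr q"
  proof -
    have "m\<^sup>2 = m powr 2" using mpos by (simp add: powr_numeral)
    moreover have "m powr (q - 2) * m powr 2 = m powr (q - 2 + 2)" by (rule powr_add[symmetric])
    ultimately show ?thesis by simp
  qed
  have A4: "m powr q \<le> F + g"
  proof (cases "Y \<le> zz")
    case True
    then have "m = zz" unfolding m_def by simp
    then have "m powr q = sqrt \<zeta>" using zzq by simp
    also have "sqrt \<zeta> \<le> F" unfolding F_def using Y by simp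
    finally show ?thesis using g0 by simp
  next
    case False
    then have "m = Y" unfolding m_def by simp
    then show ?thesis using F0 unfolding g_def by simp
  qed
  have key: "Y powr (q - 2) * (Y + zz)\<^sup>2 \<le> 4 * (F + g)"
  proof -
    have "Y powr (q - 2) * (Y + zz)\<^sup>2 \<le> m powr (q - 2) * (4 * m\<^sup>2)"
      using A1 A2 by (intro mult_mono) auto
    also have "\<dots> = 4 * (m powr q)" using A3 by simp
    also have "\<dots> \<le> 4 * (F + g)" using A4 by simp
    finally show ?thesis .
  qed
  have Yzz: "(Y + zz)\<^sup>2 > 0" using Y zzpos by simp
  have b1: "0 \<le> bet' q Y" "bet' q Y \<le> q * (q - 1) * Y powr (q - 2)" using bet'_le[of q Y] q2 by auto
  have "bet' q Y * (F - g) \<le> q * (q - 1) * Y powr (q - 2) * (\<zeta> / (F + g))"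
    using b1 Fmg Fg by (intro mult_mono) auto
  also have "\<dots> \<le> 4 * q * (q - 1) * \<zeta> / (Y + zz)\<^sup>2"
  proof -
    have "Y powr (q - 2) / (F + g) \<le> 4 / (Y + zz)\<^sup>2"
      using key Fgpos Yzz by (simp add: divide_le_eq le_divide_eq mult.commute)
    then have "q * (q - 1) * \<zeta> * (Y powr (q - 2) / (F + g)) \<le> q * (q - 1) * \<zeta> * (4 / (Y + zz)\<^sup>2)"
      using q2 z by (intro mult_left_mono) auto
    then show ?thesis by (simp add: field_simps)
  qed
  finally show ?thesis unfolding F_def g_def zz_def .
qed

definition Ef :: "real \<Rightarrow> real \<Rightarrow> real \<Rightarrow> real \<Rightarrow> real \<Rightarrow> real \<Rightarrow> real" where
  "Ef q c \<zeta> z \<eta> y = \<eta> * bet q y - c * \<zeta> / (y + z)"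
definition Af :: "real \<Rightarrow> real \<Rightarrow> real \<Rightarrow> real \<Rightarrow> real \<Rightarrow> real \<Rightarrow> real" where
  "Af q c \<zeta> z \<eta> y = Sq q y - bet q y * y powr q - Ef q c \<zeta> z \<eta> y"
definition Af' :: "real \<Rightarrow> real \<Rightarrow> real \<Rightarrow> real \<Rightarrow> real \<Rightarrow> real \<Rightarrow> real" where
  "Af' q c \<zeta> z \<eta> y = 1 / Sp q y - bet' q y * y powr q - (\<eta> * bet' q y + c * \<zeta> / (y + z)\<^sup>2)"

lemma Sp_sq: "(Sp q y)\<^sup>2 = 1 + (wq q y)\<^sup>2" unfolding Sp_def by simp

lemma d_Af:
  assumes q: "q > 1" and z: "z > 0" and y: "y > 0"
  shows "(Af q c \<zeta> z \<eta> has_real_derivative Af' q c \<zeta> z \<eta> y) (at y)"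
proof -
  have h1: "(Sq q has_real_derivative Sp q y) (at y)" by (rule d_Sq[OF q y])
  have h2: "((\<lambda>y. bet q y * y powr q) has_real_derivative bet' q y * y powr q + wq q y * bet q y) (at y)"
    by (rule DERIV_mult[OF d_bet[OF y] d_powr[OF y]])
  have h3: "((\<lambda>y. \<eta> * bet q y) has_real_derivative \<eta> * bet' q y) (at y)"
    by (rule DERIV_cmult[OF d_bet[OF y]])
  have yz: "y + z \<noteq> 0" using y z by simp
  have h4: "((\<lambda>y. c * \<zeta> / (y + z)) has_real_derivative - (c * \<zeta>) / (y + z)\<^sup>2) (at y)"
    by (auto intro!: derivative_eq_intros simp: yz power2_eq_square field_simps)
  have h: "(Af q c \<zeta> z \<eta> has_real_derivative
      Sp q y - (bet' q y * y powr q + wq q y * bet q y) - (\<eta> * bet' q y - - (c * \<zeta>) / (y + z)\<^sup>2)) (at y)"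
    unfolding Af_def[abs_def] Ef_def
    by (intro DERIV_diff h1 h2 h3 h4)
  have e: "Sp q y - wq q y * bet q y = 1 / Sp q y"
  proof -
    have "Sp q y - wq q y * bet q y = ((Sp q y)\<^sup>2 - (wq q y)\<^sup>2) / Sp q y"
      unfolding bet_def using Sp_pos[of q y] by (simp add: field_simps power2_eq_square)
    then show ?thesis using Sp_sq[of q y] by simp
  qed
  show ?thesis
    by (rule DERIV_cong[OF h]) (use e in \<open>simp add: Af'_def algebra_simps\<close>)
qed

lemma cont_Af:
  assumes q: "q > 1" and z: "z > 0"
  shows "continuous_on {0..T} (Af q c \<zeta> z \<eta>)"
proof -
  have s: "{0..T} \<subseteq> {0::real..}" by auto
  show ?thesis unfolding Af_def[abs_def] Ef_def
    by (intro continuous_intros cont_Sq[OF q] continuous_on_subset[OF cont_bet[OF q] s]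
         continuous_on_subset[OF cont_powr s]) (use q z in auto)
qed

lemma I2:
  assumes q: "q > 2" and Y: "0 < Y" "Y \<le> \<epsilon>" and e1: "\<epsilon> \<le> 1"
    and c1: "2 * q * (q - 1) * \<epsilon> powr (q - 2) \<le> 1 / 2" and c2: "q * \<epsilon> powr (q - 1) \<le> 1"
    and z: "z > 0" and c: "c \<ge> 0" and zeta: "\<zeta> > 0" and c3: "c * \<zeta> / z\<^sup>2 \<le> 1 / 2"
    and eta: "0 \<le> \<eta>" "\<eta> \<le> 1"
  shows "bet' q Y * (Y powr q + \<eta>) + c * \<zeta> / (Y + z)\<^sup>2 \<le> 2 / Sp q Y"
proof -
  have b1: "0 \<le> bet' q Y" "bet' q Y \<le> q * (q - 1) * Y powr (q - 2)" using bet'_le[of q Y] q by auto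
  have "Y powr (q - 2) \<le> \<epsilon> powr (q - 2)" using Y q by (intro powr_mono2) auto
  then have b2: "bet' q Y \<le> q * (q - 1) * \<epsilon> powr (q - 2)" using b1 q
    by (smt (verit) mult_left_mono mult_nonneg_nonneg)
  have g1: "Y powr q \<le> 1"
  proof -
    have "Y powr q \<le> 1 powr q" using Y e1 q by (intro powr_mono2) auto
    then show ?thesis by simp
  qed
  have t1: "bet' q Y * (Y powr q + \<eta>) \<le> q * (q - 1) * \<epsilon> powr (q - 2) * 2"
    using b1 b2 g1 eta by (intro mult_mono) auto
  have zz: "z\<^sup>2 \<le> (Y + z)\<^sup>2" using Y z by (intro power_mono) auto
  have t2: "c * \<zeta> / (Y + z)\<^sup>2 \<le> c * \<zeta> / z\<^sup>2"
    by (rule frac_le) (use c zeta z zz in simp_all)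
  have w: "wq q Y \<le> 1"
  proof -
    have "Y powr (q - 1) \<le> \<epsilon> powr (q - 1)" using Y q by (intro powr_mono2) auto
    then have "q * Y powr (q - 1) \<le> q * \<epsilon> powr (q - 1)" using q by simp
    then show ?thesis unfolding wq_def using c2 by simp
  qed
  have w0: "wq q Y \<ge> 0" unfolding wq_def using q by simp
  have "Sp q Y \<le> 2"
  proof -
    have "(wq q Y)\<^sup>2 \<le> 1" using w w0 by (simp add: power_le_one)
    then have "1 + (wq q Y)\<^sup>2 \<le> 2\<^sup>2" by simp
    then have "sqrt (1 + (wq q Y)\<^sup>2) \<le> sqrt (2\<^sup>2)" by (rule real_sqrt_le_mono)
    then show ?thesis unfolding Sp_def by simp
  qed
  then have "1 \<le> 2 / Sp q Y" using Sp_pos[of q Y] by (simp add: le_divide_eq)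
  then show ?thesis using t1 t2 c1 c3 by linarith
qed

lemma grad_ok:
  assumes hI1: "bet' q Y * (F - Y powr q) \<le> c * \<zeta> / (Y + z)\<^sup>2"
    and hI2: "bet' q Y * (Y powr q + \<eta>) + c * \<zeta> / (Y + z)\<^sup>2 \<le> 2 / Sp q Y"
    and X: "0 \<le> X" "X \<le> F + \<eta>" and b0: "0 \<le> bet' q Y"
  shows "(Af' q c \<zeta> z \<eta> Y + bet' q Y * X)\<^sup>2 + (bet q Y)\<^sup>2 \<le> 1"
proof -
  define a where "a = Af' q c \<zeta> z \<eta> Y + bet' q Y * X"
  define r where "r = 1 / Sp q Y"
  have a: "a = r + bet' q Y * (X - Y powr q - \<eta>) - c * \<zeta> / (Y + z)\<^sup>2"
    unfolding a_def r_def Af'_def by (simp add: algebra_simps)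
  have u1: "bet' q Y * (X - Y powr q - \<eta>) \<le> bet' q Y * (F - Y powr q)"
    using X b0 by (intro mult_left_mono) auto
  have l1: "bet' q Y * (X - Y powr q - \<eta>) \<ge> - (bet' q Y * (Y powr q + \<eta>))"
  proof -
    have "bet' q Y * (X - Y powr q - \<eta>) = bet' q Y * X - bet' q Y * (Y powr q + \<eta>)"
      by (simp add: algebra_simps)
    moreover have "bet' q Y * X \<ge> 0" using X b0 by simp
    ultimately show ?thesis by linarith
  qed
  have r2: "2 / Sp q Y = 2 * r" unfolding r_def by simp
  have up: "a \<le> r" using a u1 hI1 by linarith
  have lo: "- r \<le> a" using a l1 hI2 r2 by linarith
  have "a\<^sup>2 \<le> r\<^sup>2"
  proof -
    have "\<bar>a\<bar> \<le> r" using up lo by linarith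
    then have "\<bar>a\<bar>\<^sup>2 \<le> r\<^sup>2" by (intro power_mono) auto
    then show ?thesis by simp
  qed
  moreover have "r\<^sup>2 + (bet q Y)\<^sup>2 = 1"
  proof -
    have "r\<^sup>2 + (bet q Y)\<^sup>2 = (1 + (wq q Y)\<^sup>2) / (Sp q Y)\<^sup>2"
      unfolding r_def bet_def by (simp add: power_divide add_divide_distrib)
    also have "\<dots> = 1" using Sp_sq[of q Y] Sp_pos[of q Y] add_pos_nonneg[of 1 "(wq q Y)\<^sup>2"] by simp
    finally show ?thesis .
  qed
  ultimately show ?thesis unfolding a_def by linarith
qed

lemma seg_step:
  fixes b :: nat and \<zeta> \<epsilon> \<eta> y y' x x' :: real
  assumes q: "q = real b / 2" and b: "b \<ge> 5" and zeta: "\<zeta> > 0"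
    and z: "z = \<zeta> powr (1 / real b)" and c: "c = 4 * q * (q - 1)"
    and eta: "0 \<le> \<eta>" "\<eta> \<le> 1" and e1: "\<epsilon> \<le> 1"
    and c1: "2 * q * (q - 1) * \<epsilon> powr (q - 2) \<le> 1 / 2" and c2: "q * \<epsilon> powr (q - 1) \<le> 1"
    and c3: "c * \<zeta> / z\<^sup>2 \<le> 1 / 2"
    and yy: "0 \<le> y" "y < y'" "y' \<le> \<epsilon>"
    and Fy: "sqrt (\<zeta> + y' ^ b) \<le> sqrt (\<zeta> + y ^ b) + \<eta>"
    and xx: "0 \<le> x" "x \<le> sqrt (\<zeta> + y ^ b)" "0 \<le> x'" "x' \<le> sqrt (\<zeta> + y' ^ b)"
  shows "(Af q c \<zeta> z \<eta> y' + bet q y' * x') - (Af q c \<zeta> z \<eta> y + bet q y * x) \<le> norm ((x', y') - (x, y))"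
proof (rule seg_abstract[where A' = "Af' q c \<zeta> z \<eta>" and B' = "bet' q"])
  have q1: "q > 2" using q b by simp
  have zpos: "z > 0" using z zeta by simp
  have c0: "c \<ge> 0" using c q1 by simp
  show "y < y'" by fact
  show "continuous_on {y..y'} (Af q c \<zeta> z \<eta>)"
    by (rule continuous_on_subset[OF cont_Af[of q z y' c \<zeta> \<eta>]]) (use q1 zpos yy in auto)
  show "continuous_on {y..y'} (bet q)"
    by (rule continuous_on_subset[OF cont_bet]) (use q1 yy in auto)
  fix Y assume Y: "y < Y" "Y < y'"
  then have Ypos: "Y > 0" using yy by simp
  show "(Af q c \<zeta> z \<eta> has_real_derivative Af' q c \<zeta> z \<eta> Y) (at Y)"
    by (rule d_Af) (use q1 zpos Ypos in auto)
  show "(bet q has_real_derivative bet' q Y) (at Y)" by (rule d_bet[OF Ypos])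
  fix X assume X: "min x x' \<le> X" "X \<le> max x x'"
  have X0: "0 \<le> X" using X xx by linarith
  have mono: "sqrt (\<zeta> + y ^ b) \<le> sqrt (\<zeta> + Y ^ b)"
    using yy Y by (intro real_sqrt_le_mono add_left_mono power_mono) auto
  have mono2: "sqrt (\<zeta> + y ^ b) \<le> sqrt (\<zeta> + y' ^ b)"
    using yy by (intro real_sqrt_le_mono add_left_mono power_mono) auto
  have X1: "X \<le> sqrt (\<zeta> + Y ^ b) + \<eta>" using X xx Fy mono mono2 by linarith
  have hI1: "bet' q Y * (sqrt (\<zeta> + Y ^ b) - Y powr q) \<le> c * \<zeta> / (Y + z)\<^sup>2"
    using I1[OF q b zeta Ypos] unfolding c z by (simp add: mult.assoc)
  have hI2: "bet' q Y * (Y powr q + \<eta>) + c * \<zeta> / (Y + z)\<^sup>2 \<le> 2 / Sp q Y"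
    by (rule I2[OF q1 Ypos _ e1 c1 c2 zpos c0 zeta c3 eta]) (use Y yy in auto)
  show "(Af' q c \<zeta> z \<eta> Y + bet' q Y * X)\<^sup>2 + (bet q Y)\<^sup>2 \<le> 1"
    by (rule grad_ok[OF hI1 hI2 X0 X1]) (use bet'_le[of q Y] q1 in auto)
qed

lemma bet_le1: "bet q y \<le> 1"
proof -
  have "wq q y \<le> \<bar>wq q y\<bar>" by simp
  also have "\<bar>wq q y\<bar> = sqrt ((wq q y)\<^sup>2)" by simp
  also have "\<dots> \<le> Sp q y" unfolding Sp_def by (intro real_sqrt_le_mono) simp
  finally show ?thesis unfolding bet_def using Sp_pos[of q y] by (simp add: divide_le_eq)
qed

lemma Sp_eq: "q > 1 \<Longrightarrow> t \<ge> 0 \<Longrightarrow> Sp q t = sqrt (1 + q ^ 2 * t powr (2 * q - 2))"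
proof -
  assume q: "q > 1" and t: "t \<ge> 0"
  have "(wq q t)\<^sup>2 = q ^ 2 * t powr (2 * q - 2)"
  proof (cases "t = 0")
    case True then show ?thesis using q unfolding wq_def by simp
  next
    case False
    have "(wq q t)\<^sup>2 = q ^ 2 * (t powr (q - 1) * t powr (q - 1))"
      unfolding wq_def by (simp add: power2_eq_square)
    also have "t powr (q - 1) * t powr (q - 1) = t powr (q - 1 + (q - 1))" by (rule powr_add[symmetric])
    finally show ?thesis by (simp add: algebra_simps)
  qed
  then show ?thesis unfolding Sp_def by simp
qed

lemma eventually_small:
  fixes B a D :: real
  assumes "a > 0" "D > 0"
  shows "eventually (\<lambda>\<epsilon>. B * \<epsilon> powr a < D) (at_right 0)"
proof -
  have "((\<lambda>\<epsilon>::real. \<epsilon> powr a) \<longlongrightarrow> 0) (at_right 0)"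
  proof (rule tendsto_zero_powrI[OF tendsto_ident_at tendsto_const _ assms(1)])
    show "\<forall>\<^sub>F x in at_right (0::real). 0 \<le> x"
      using eventually_at_right_less[of "0::real"] by (rule eventually_mono) simp
  qed
  then have "((\<lambda>\<epsilon>::real. B * \<epsilon> powr a) \<longlongrightarrow> B * 0) (at_right 0)" by (intro tendsto_mult tendsto_const)
  then have "((\<lambda>\<epsilon>::real. B * \<epsilon> powr a) \<longlongrightarrow> 0) (at_right 0)" by simp
  from order_tendstoD(2)[OF this assms(2)] show ?thesis .
qed

lemma main_bound:
  fixes b :: nat and \<epsilon> \<zeta> s q c :: real and \<nu> :: "real \<Rightarrow> real \<times> real"
  assumes q: "q = real b / 2" and b: "b \<ge> 5" and c: "c = 4 * q * (q - 1)"
   and e: "0 < \<epsilon>" "\<epsilon> \<le> 1" and c1: "2 * q * (q - 1) * \<epsilon> powr (q - 2) \<le> 1 / 2"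
   and c2: "q * \<epsilon> powr (q - 1) \<le> 1"
   and zeta: "\<zeta> > 0" "\<zeta> \<le> 1" and c3: "c * \<zeta> powr (1 - 2 / real b) \<le> 1 / 2" and s: "s \<ge> 0"
   and ac: "abs_cont_on 0 1 \<nu>" and n0: "\<nu> 0 = (0, - s)" and n1: "\<nu> 1 = (\<epsilon> powr q, \<epsilon>)"
   and D: "\<nu> ` {0..1} \<subseteq> Dzeta b \<zeta>"
  shows "curve_length 0 1 \<nu> \<ge> L_SR b s \<epsilon> - (c + 1) * \<zeta> powr (1 - 1 / real b)"
proof -
  define z where "z = \<zeta> powr (1 / real b)"
  define \<eta> where "\<eta> = \<zeta> powr (1 - 1 / real b)"
  define F where "F = (\<lambda>y::real. sqrt (\<zeta> + y ^ b))"
  have q2: "q > 2" using q b by simp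
  have bpos: "real b > 0" using b by simp
  have zpos: "z > 0" unfolding z_def using zeta by simp
  have etapos: "\<eta> > 0" unfolding \<eta>_def using zeta by simp
  have eta1: "\<eta> \<le> 1"
  proof -
    have "\<eta> \<le> 1 powr (1 - 1 / real b)" unfolding \<eta>_def using zeta b
      by (intro powr_mono2) (auto simp: field_simps)
    then show ?thesis by simp
  qed
  have z2: "z\<^sup>2 = \<zeta> powr (2 / real b)"
  proof -
    have "z\<^sup>2 = \<zeta> powr (1 / real b) * \<zeta> powr (1 / real b)" unfolding z_def by (simp add: power2_eq_square)
    also have "\<dots> = \<zeta> powr (1 / real b + 1 / real b)" by (rule powr_add[symmetric])
    finally show ?thesis by simp
  qed
  have c3': "c * \<zeta> / z\<^sup>2 \<le> 1 / 2"
  proof -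
    have "\<zeta> / z\<^sup>2 = \<zeta> powr 1 / \<zeta> powr (2 / real b)" using z2 zeta by simp
    also have "\<dots> = \<zeta> powr (1 - 2 / real b)" by (rule powr_diff[symmetric])
    finally show ?thesis using c3 by (metis times_divide_eq_right)
  qed
  have cz: "c * \<zeta> / z = c * \<eta>"
  proof -
    have "\<zeta> / z = \<zeta> powr 1 / \<zeta> powr (1 / real b)" unfolding z_def using zeta by simp
    also have "\<dots> = \<eta>" unfolding \<eta>_def by (rule powr_diff[symmetric])
    finally show ?thesis by (metis times_divide_eq_right)
  qed
  have c0: "c \<ge> 0" using c q2 by simp
  have cF: "continuous_on {0..\<epsilon>} F" unfolding F_def by (intro continuous_intros)
  have uF: "uniformly_continuous_on {0..\<epsilon>} F" by (rule compact_uniformly_continuous[OF cF compact_Icc])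
  obtain d where d: "d > 0" and dH: "\<forall>x\<in>{0..\<epsilon>}. \<forall>x'\<in>{0..\<epsilon>}. dist x' x < d \<longrightarrow> dist (F x') (F x) < \<eta>"
    using uF etapos unfolding uniformly_continuous_on_def by blast
  obtain N :: nat where N: "\<epsilon> / d < real N" using reals_Archimedean2 by blast
  have Npos: "real N > 0" using N e d by (smt (verit) divide_pos_pos)
  have step_small: "\<epsilon> / real N < d" using N Npos d e by (simp add: field_simps)
  define lev where "lev = (\<lambda>k::nat. if k = 0 then - s else \<epsilon> * real (min (k - 1) N) / real N)"
  have lev_nonneg: "k \<noteq> 0 \<Longrightarrow> lev k \<ge> 0" for k unfolding lev_def using e Npos by simp
  have ml: "mono lev"
  proof (rule monoI)
    fix k k' :: nat assume kk: "k \<le> k'"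
    show "lev k \<le> lev k'"
    proof (cases "k = 0")
      case True
      then show ?thesis using lev_nonneg[of k'] s unfolding lev_def by (cases "k' = 0") auto
    next
      case False
      then have "real (min (k - 1) N) \<le> real (min (k' - 1) N)" using kk by simp
      then have "\<epsilon> * real (min (k - 1) N) \<le> \<epsilon> * real (min (k' - 1) N)" using e by simp
      then show ?thesis unfolding lev_def using False kk Npos by (simp add: divide_right_mono)
    qed
  qed
  have lev_i: "lev (Suc i) = \<epsilon> * real i / real N" if "i \<le> N" for i
    unfolding lev_def using that by simp
  have cont: "continuous_on {0..1} \<nu>" by (rule abs_cont_continuous[OF ac])
  have l0: "lev 0 = snd (\<nu> 0)" unfolding lev_def using n0 by simp
  have LP: "\<forall>T. 0 \<le> T \<and> T \<le> 1 \<and> snd (\<nu> T) = lev (Suc N) \<longrightarrow>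
     (\<exists>t. t 0 = 0 \<and> t (Suc N) = T \<and> (\<forall>i<Suc N. t i \<le> t (Suc i)) \<and>
          (\<forall>k\<le>Suc N. 0 \<le> t k \<and> t k \<le> 1 \<and> snd (\<nu> (t k)) = lev k))"
    by (rule levels_partition[OF cont l0 ml])
  have s1: "snd (\<nu> 1) = lev (Suc N)" using lev_i[of N] n1 Npos by simp
  have "\<exists>t. t 0 = 0 \<and> t (Suc N) = 1 \<and> (\<forall>i<Suc N. t i \<le> t (Suc i)) \<and>
          (\<forall>k\<le>Suc N. 0 \<le> t k \<and> t k \<le> 1 \<and> snd (\<nu> (t k)) = lev k)"
    by (rule LP[rule_format]) (simp add: s1)
  then obtain t where t0: "t 0 = 0" and t1: "t (Suc N) = 1" and tm: "\<forall>i<Suc N. t i \<le> t (Suc i)"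
     and tk: "\<forall>k\<le>Suc N. 0 \<le> t k \<and> t k \<le> 1 \<and> snd (\<nu> (t k)) = lev k"
    by blast
  define p where "p = (\<lambda>k. \<nu> (t k))"
  have pD: "0 \<le> fst (p k) \<and> (0 \<le> snd (p k) \<longrightarrow> fst (p k) \<le> F (snd (p k)))" if "k \<le> Suc N" for k
  proof -
    have "p k \<in> Dzeta b \<zeta>" unfolding p_def using D tk that by auto
    then have f0: "0 \<le> fst (p k)" and pt: "Ptilde b (p k) \<le> \<zeta>" unfolding Dzeta_def by auto
    have "fst (p k) \<le> F (snd (p k))" if "0 \<le> snd (p k)"
    proof -
      have "(fst (p k))\<^sup>2 \<le> \<zeta> + (snd (p k)) ^ b" using pt that unfolding Ptilde_def P_def by simp
      then show ?thesis unfolding F_def by (rule real_le_rsqrt)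
    qed
    then show ?thesis using f0 by simp
  qed
  have snd_p: "snd (p k) = lev k" if "k \<le> Suc N" for k unfolding p_def using tk that by simp
  define \<Phi> where "\<Phi> = (\<lambda>x::real \<times> real. Af q c \<zeta> z \<eta> (snd x) + bet q (snd x) * fst x)"
  have poly: "(\<Sum>i<Suc N. norm (p (Suc i) - p i)) \<le> curve_length 0 1 \<nu>"
    unfolding p_def by (rule curve_length_ge[OF ac t0 t1 tm])
  have first: "s \<le> norm (p 1 - p 0)"
  proof -
    have "snd (p 1) = 0" using snd_p[of 1] lev_i[of 0] by simp
    moreover have "snd (p 0) = - s" unfolding p_def using t0 n0 by simp
    ultimately have "snd (p 1 - p 0) = s" by simp
    then have "norm (snd (p 1 - p 0)) = s" using s by simp
    moreover have "norm (snd (p 1 - p 0)) \<le> norm (p 1 - p 0)"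
      using norm_snd_le[where x="fst (p 1 - p 0)" and y="snd (p 1 - p 0)"] by (simp only: prod.collapse)
    ultimately show ?thesis by simp
  qed
  have stepi: "\<Phi> (p (Suc (Suc i))) - \<Phi> (p (Suc i)) \<le> norm (p (Suc (Suc i)) - p (Suc i))" if i: "i < N" for i
  proof -
    define y where "y = \<epsilon> * real i / real N"
    define y' where "y' = \<epsilon> * real (Suc i) / real N"
    have sy: "snd (p (Suc i)) = y" unfolding y_def using snd_p[of "Suc i"] lev_i[of i] i by simp
    have sy': "snd (p (Suc (Suc i))) = y'" unfolding y'_def using snd_p[of "Suc (Suc i)"] lev_i[of "Suc i"] i by simp
    have y0: "0 \<le> y" unfolding y_def using e Npos by simp
    have yy': "y < y'" unfolding y_def y'_def using e Npos by (simp add: divide_strict_right_mono)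
    have y'e: "y' \<le> \<epsilon>"
    proof -
      have "real (Suc i) \<le> real N" using i by simp
      then have "\<epsilon> * real (Suc i) \<le> \<epsilon> * real N" using e by (intro mult_left_mono) auto
      then show ?thesis unfolding y'_def pos_divide_le_eq[OF Npos] by simp
    qed
    have ye: "y \<le> \<epsilon>" using yy' y'e by simp
    have dyy: "dist y' y < d"
    proof -
      have "y' - y = \<epsilon> / real N" unfolding y_def y'_def by (simp add: algebra_simps add_divide_distrib)
      then show ?thesis using step_small yy' by (simp add: dist_real_def)
    qed
    have "dist (F y') (F y) < \<eta>" using dH y0 ye yy' y'e dyy by auto
    then have Fy: "F y' \<le> F y + \<eta>" by (simp add: dist_real_def)
    have x1: "0 \<le> fst (p (Suc i))" "fst (p (Suc i)) \<le> F y" using pD[of "Suc i"] sy y0 i by auto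
    have x2: "0 \<le> fst (p (Suc (Suc i)))" "fst (p (Suc (Suc i))) \<le> F y'" using pD[of "Suc (Suc i)"] sy' y0 yy' i by auto
    have "(Af q c \<zeta> z \<eta> y' + bet q y' * fst (p (Suc (Suc i)))) - (Af q c \<zeta> z \<eta> y + bet q y * fst (p (Suc i)))
        \<le> norm ((fst (p (Suc (Suc i))), y') - (fst (p (Suc i)), y))"
      by (rule seg_step[OF q b zeta(1) z_def c etapos[THEN less_imp_le] eta1 e(2) c1 c2 c3' y0 yy' y'e])
         (use Fy x1 x2 in \<open>simp_all add: F_def\<close>)
    moreover have "(fst (p (Suc (Suc i))), y') = p (Suc (Suc i))" using sy' by (metis prod.collapse)
    moreover have "(fst (p (Suc i)), y) = p (Suc i)" using sy by (metis prod.collapse)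
    ultimately show ?thesis unfolding \<Phi>_def using sy sy' by simp
  qed
  have tele: "(\<Sum>i<N. \<Phi> (p (Suc (Suc i))) - \<Phi> (p (Suc i))) = \<Phi> (p (Suc N)) - \<Phi> (p (Suc 0))"
    by (rule sum_lessThan_telescope)
  have sum2: "\<Phi> (p (Suc N)) - \<Phi> (p 1) \<le> (\<Sum>i<N. norm (p (Suc (Suc i)) - p (Suc i)))"
    using tele sum_mono[of "{..<N}" "\<lambda>i. \<Phi> (p (Suc (Suc i))) - \<Phi> (p (Suc i))" "\<lambda>i. norm (p (Suc (Suc i)) - p (Suc i))"] stepi
    by simp
  have split: "(\<Sum>i<Suc N. norm (p (Suc i) - p i)) = norm (p 1 - p 0) + (\<Sum>i<N. norm (p (Suc (Suc i)) - p (Suc i)))"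
    by (subst sum.lessThan_Suc_shift) simp
  have PhiN: "\<Phi> (p (Suc N)) \<ge> Sq q \<epsilon> - \<eta>"
  proof -
    have pN: "p (Suc N) = (\<epsilon> powr q, \<epsilon>)" unfolding p_def using t1 n1 by simp
    have "\<Phi> (p (Suc N)) = Sq q \<epsilon> - \<eta> * bet q \<epsilon> + c * \<zeta> / (\<epsilon> + z)"
      unfolding \<Phi>_def pN Af_def Ef_def by simp
    moreover have "\<eta> * bet q \<epsilon> \<le> \<eta>" using bet_le1[of q \<epsilon>] etapos by (simp add: mult_left_le)
    moreover have "c * \<zeta> / (\<epsilon> + z) \<ge> 0" using c0 zeta e zpos by simp
    ultimately show ?thesis by linarith
  qed
  have Phi1: "\<Phi> (p 1) = c * \<eta>"
  proof -
    have "snd (p 1) = 0" using snd_p[of 1] lev_i[of 0] by simp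
    then have "\<Phi> (p 1) = c * \<zeta> / z" unfolding \<Phi>_def Af_def Ef_def using bet0[of q] q2 Sq0[of q] by simp
    then show ?thesis using cz by simp
  qed
  have LSR: "L_SR b s \<epsilon> = s + Sq q \<epsilon>"
  proof -
    have "integral {0..\<epsilon>} (\<lambda>t. sqrt (1 + (real b / 2)\<^sup>2 * t powr (2 * (real b / 2) - 2))) = integral {0..\<epsilon>} (Sp q)"
    proof (rule integral_cong)
      fix x assume "x \<in> {0..\<epsilon>}"
      then have "Sp q x = sqrt (1 + q ^ 2 * x powr (2 * q - 2))" using Sp_eq[of q x] q2 by simp
      then show "sqrt (1 + (real b / 2)\<^sup>2 * x powr (2 * (real b / 2) - 2)) = Sp q x"
        unfolding q[symmetric] by simp
    qed
    then show ?thesis unfolding L_SR_def Sq_def by simp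
  qed
  have "L_SR b s \<epsilon> - (c + 1) * \<zeta> powr (1 - 1 / real b) = s + Sq q \<epsilon> - \<eta> - c * \<eta>"
    unfolding LSR \<eta>_def by (simp add: algebra_simps)
  also have "\<dots> \<le> (\<Sum>i<Suc N. norm (p (Suc i) - p i))"
    using split first sum2 PhiN Phi1 by simp
  also have "\<dots> \<le> curve_length 0 1 \<nu>" by (rule poly)
  finally show ?thesis .
qed

theorem mainTheorem8:
  fixes b :: nat and C :: real
  assumes "odd b" and "b \<ge> 5" and "C > 0"
  defines "q \<equiv> real b / 2"
  shows "\<exists>K>0. \<exists>\<epsilon>0>0. \<forall>\<epsilon> \<zeta> s.
           0 < \<epsilon> \<and> \<epsilon> < \<epsilon>0 \<and> 0 < \<zeta> \<and> \<zeta> \<le> C * \<epsilon> powr (3 * q - 1) \<and> s \<ge> 0 \<longrightarrow>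
           (\<forall>\<nu> :: real \<Rightarrow> real \<times> real.
              abs_cont_on 0 1 \<nu> \<and> \<nu> 0 = (0, - s) \<and> \<nu> 1 = (\<epsilon> powr q, \<epsilon>) \<and>
              \<nu> ` {0..1} \<subseteq> Dzeta b \<zeta>
              \<longrightarrow> curve_length 0 1 \<nu> \<ge> L_SR b s \<epsilon> - K * \<zeta> powr (1 - 1 / real b))"
proof -
  have qe: "q = real b / 2" unfolding q_def by simp
  have b5: "b \<ge> 5" by fact
  have q2: "q > 2" using b5 unfolding q_def by simp
  define c where "c = 4 * q * (q - 1)"
  have cpos: "c > 0" using q2 unfolding c_def by simp
  define X where "X = (1 / (2 * c)) powr (real b / (real b - 2))"
  define Z0 where "Z0 = min 1 X"
  have Xpos: "X > 0" unfolding X_def using cpos by simp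
  have Z0pos: "Z0 > 0" unfolding Z0_def using Xpos by simp
  have Z0c: "c * \<zeta> powr (1 - 2 / real b) \<le> 1 / 2" if z: "0 < \<zeta>" "\<zeta> \<le> Z0" for \<zeta>
  proof -
    have zX: "\<zeta> \<le> X" using z unfolding Z0_def by simp
    have ex: "1 - 2 / real b \<ge> 0" using b5 by (simp add: field_simps)
    have "\<zeta> powr (1 - 2 / real b) \<le> X powr (1 - 2 / real b)"
      by (rule powr_mono2[OF ex]) (use z zX in auto)
    also have "X powr (1 - 2 / real b) = (1 / (2 * c)) powr (real b / (real b - 2) * (1 - 2 / real b))"
      unfolding X_def by (simp add: powr_powr)
    also have "real b / (real b - 2) * (1 - 2 / real b) = 1" using b5 by (simp add: field_simps)
    finally have "\<zeta> powr (1 - 2 / real b) \<le> 1 / (2 * c)" using cpos by simp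
    then have "c * \<zeta> powr (1 - 2 / real b) \<le> c * (1 / (2 * c))" using cpos by (intro mult_left_mono) auto
    also have "\<dots> = 1 / 2" using cpos by simp
    finally show ?thesis .
  qed
  have ev: "eventually (\<lambda>\<epsilon>. (2 * q * (q - 1)) * \<epsilon> powr (q - 2) < 1 / 2 \<and> q * \<epsilon> powr (q - 1) < 1 \<and>
        C * \<epsilon> powr (3 * q - 1) < Z0) (at_right 0)"
    by (intro eventually_conj eventually_small) (use q2 Z0pos in auto)
  then obtain e0 where e0: "e0 > 0" and e0H: "\<forall>y>0. y < e0 \<longrightarrow> (2 * q * (q - 1)) * y powr (q - 2) < 1 / 2 \<and>
        q * y powr (q - 1) < 1 \<and> C * y powr (3 * q - 1) < Z0"
    unfolding eventually_at_right_field by auto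
  show ?thesis
  proof (rule exI[of _ "c + 1"], rule conjI)
    show "c + 1 > 0" using cpos by simp
    show "\<exists>\<epsilon>0>0. \<forall>\<epsilon> \<zeta> s.
           0 < \<epsilon> \<and> \<epsilon> < \<epsilon>0 \<and> 0 < \<zeta> \<and> \<zeta> \<le> C * \<epsilon> powr (3 * q - 1) \<and> s \<ge> 0 \<longrightarrow>
           (\<forall>\<nu> :: real \<Rightarrow> real \<times> real.
              abs_cont_on 0 1 \<nu> \<and> \<nu> 0 = (0, - s) \<and> \<nu> 1 = (\<epsilon> powr q, \<epsilon>) \<and>
              \<nu> ` {0..1} \<subseteq> Dzeta b \<zeta>
              \<longrightarrow> curve_length 0 1 \<nu> \<ge> L_SR b s \<epsilon> - (c + 1) * \<zeta> powr (1 - 1 / real b))"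
    proof (rule exI[of _ "min e0 1"], rule conjI)
      show "min e0 1 > 0" using e0 by simp
      show "\<forall>\<epsilon> \<zeta> s.
           0 < \<epsilon> \<and> \<epsilon> < min e0 1 \<and> 0 < \<zeta> \<and> \<zeta> \<le> C * \<epsilon> powr (3 * q - 1) \<and> s \<ge> 0 \<longrightarrow>
           (\<forall>\<nu> :: real \<Rightarrow> real \<times> real.
              abs_cont_on 0 1 \<nu> \<and> \<nu> 0 = (0, - s) \<and> \<nu> 1 = (\<epsilon> powr q, \<epsilon>) \<and>
              \<nu> ` {0..1} \<subseteq> Dzeta b \<zeta>
              \<longrightarrow> curve_length 0 1 \<nu> \<ge> L_SR b s \<epsilon> - (c + 1) * \<zeta> powr (1 - 1 / real b))"
      proof (intro allI impI)
        fix \<epsilon> \<zeta> s :: real and \<nu> :: "real \<Rightarrow> real \<times> real"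
        assume H: "0 < \<epsilon> \<and> \<epsilon> < min e0 1 \<and> 0 < \<zeta> \<and> \<zeta> \<le> C * \<epsilon> powr (3 * q - 1) \<and> s \<ge> 0"
          and Hn: "abs_cont_on 0 1 \<nu> \<and> \<nu> 0 = (0, - s) \<and> \<nu> 1 = (\<epsilon> powr q, \<epsilon>) \<and> \<nu> ` {0..1} \<subseteq> Dzeta b \<zeta>"
        have e: "0 < \<epsilon>" "\<epsilon> \<le> 1" "\<epsilon> < e0" using H by auto
        have P: "(2 * q * (q - 1)) * \<epsilon> powr (q - 2) < 1 / 2" "q * \<epsilon> powr (q - 1) < 1"
            "C * \<epsilon> powr (3 * q - 1) < Z0" using e0H e by auto
        have zeta: "\<zeta> > 0" "\<zeta> \<le> Z0" using H P(3) by auto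
        have z1: "\<zeta> \<le> 1" using zeta unfolding Z0_def by simp
        show "curve_length 0 1 \<nu> \<ge> L_SR b s \<epsilon> - (c + 1) * \<zeta> powr (1 - 1 / real b)"
          by (rule main_bound[OF qe b5 c_def e(1) e(2) _ _ zeta(1) z1 Z0c[OF zeta]])
             (use P H Hn in auto)
      qed
    qed
  qed
qed

end
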